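(* Let $G$ and $H$ be finite groups. Then $A_G(t)=A_H(t)$ if and only if $G$ and $H$ have the same class equation.
   Context: For a finite group $G$ and an integer $n\ge 0$, $G$ acts on the Cartesian power $G^n$ by simultaneous conjugation $g\cdot(x_1,\dots,x_n)=(gx_1g^{-1},\dots,gx_ng^{-1})$. Let $\alpha_{G,n}$ denote the number of $G$-orbits on $G^n$ (so $\alpha_{G,0}=1$), and let $A_G(t)=\sum_{n\ge 0}\alpha_{G,n}t^n$ (a formal power series, which is a rational function of $t$). Two finite groups $G$ and $H$ have the same class equation if $|G|=|H|$ and the multiset of cardinalities of the conjugacy classes of $G$ equals that of $H$ (equivalently, for every $m$, the number of elements whose centralizer has order $m$ is the same in $G$ and in $H$). *)

theory Defs
  imports "HOL-Algebra.Group_Action" "HOL-Computational_Algebra.Formal_Power_Series"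
    "HOL-Library.Multiset"
begin

text \<open>Simultaneous conjugation action of G on G^n, where G^n is modelled as the
  extensional functions from {..<n} to carrier G.\<close>
definition sim_conj :: "('a, 'b) monoid_scheme \<Rightarrow> nat \<Rightarrow> 'a \<Rightarrow> (nat \<Rightarrow> 'a) \<Rightarrow> (nat \<Rightarrow> 'a)" where
  "sim_conj G n g = (\<lambda>x \<in> (\<Pi>\<^sub>E i\<in>{..<n}. carrier G).
      (\<lambda>i\<in>{..<n}. g \<otimes>\<^bsub>G\<^esub> x i \<otimes>\<^bsub>G\<^esub> inv\<^bsub>G\<^esub> g))"

definition alpha :: "('a, 'b) monoid_scheme \<Rightarrow> nat \<Rightarrow> nat" where
  "alpha G n = card (orbits G (\<Pi>\<^sub>E i\<in>{..<n}. carrier G) (sim_conj G n))"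

definition A_series :: "('a, 'b) monoid_scheme \<Rightarrow> int fps" where
  "A_series G = Abs_fps (\<lambda>n. int (alpha G n))"

definition conj_classes :: "('a, 'b) monoid_scheme \<Rightarrow> 'a set set" where
  "conj_classes G = orbits G (carrier G) (\<lambda>g x. g \<otimes>\<^bsub>G\<^esub> x \<otimes>\<^bsub>G\<^esub> inv\<^bsub>G\<^esub> g)"

definition same_class_equation :: "('a, 'b) monoid_scheme \<Rightarrow> ('c, 'd) monoid_scheme \<Rightarrow> bool" where
  "same_class_equation G H \<longleftrightarrow>
     order G = order H \<and>
     image_mset card (mset_set (conj_classes G)) = image_mset card (mset_set (conj_classes H))"

end

theory Submission
  imports Defs "HOL-Computational_Algebra.Polynomial"
begin


lemma mk_group_action:
  fixes G (structure)
  assumes G: "group G"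
    and ext: "\<And>g. g \<in> carrier G \<Longrightarrow> \<phi> g \<in> extensional E"
    and cl: "\<And>g x. g \<in> carrier G \<Longrightarrow> x \<in> E \<Longrightarrow> \<phi> g x \<in> E"
    and one: "\<And>x. x \<in> E \<Longrightarrow> \<phi> \<one>\<^bsub>G\<^esub> x = x"
    and comp: "\<And>g h x. g \<in> carrier G \<Longrightarrow> h \<in> carrier G \<Longrightarrow> x \<in> E \<Longrightarrow> \<phi> (g \<otimes>\<^bsub>G\<^esub> h) x = \<phi> g (\<phi> h x)"
  shows "group_action G E \<phi>"
proof -
  interpret group G by (rule G)
  have bij: "\<phi> g \<in> Bij E" if g: "g \<in> carrier G" for g
  proof -
    have inv1: "\<phi> (inv g) (\<phi> g x) = x" if "x \<in> E" for x
      using comp[of "inv g" g x] one[of x] g that by simp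
    have inv2: "\<phi> g (\<phi> (inv g) x) = x" if "x \<in> E" for x
      using comp[of g "inv g" x] one[of x] g that by simp
    have "bij_betw (\<phi> g) E E"
      apply (rule bij_betwI[where g="\<phi> (inv g)"])
      using cl g inv1 inv2 by auto
    then show ?thesis using ext g unfolding Bij_def by auto
  qed
  have "\<phi> \<in> hom G (BijGroup E)"
  proof (rule homI)
    show "\<phi> x \<in> carrier (BijGroup E)" if "x \<in> carrier G" for x
      using bij that by (simp add: BijGroup_def)
    show "\<phi> (x \<otimes> y) = \<phi> x \<otimes>\<^bsub>BijGroup E\<^esub> \<phi> y" if "x \<in> carrier G" "y \<in> carrier G" for x y
    proof -
      have "\<phi> (x \<otimes> y) = compose E (\<phi> x) (\<phi> y)"
        apply (rule extensionalityI[OF ext])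
        using that apply simp
         apply (simp add: compose_def)
        using comp that by (simp add: compose_def)
      then show ?thesis using bij that by (simp add: BijGroup_def)
    qed
  qed
  then show ?thesis
    unfolding group_action_def group_hom_def
    by (simp add: group_BijGroup group_hom_axioms.intro G)
qed


lemma power_sums_indep:
  fixes w :: "'a::idom \<Rightarrow> 'a"
  assumes fin: "finite S" and z: "\<And>n. (\<Sum>x\<in>S. w x * x ^ n) = 0" and s: "s \<in> S"
  shows "w s = 0"
proof -
  define P where "P = (\<Prod>t\<in>S-{s}. [:-t, 1:])"
  have polyP: "poly P x = (\<Prod>t\<in>S-{s}. x - t)" for x
    unfolding P_def by (simp add: poly_prod)
  have "(\<Sum>x\<in>S. w x * poly P x) = (\<Sum>x\<in>S. w x * (\<Sum>i\<le>degree P. coeff P i * x ^ i))"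
    by (simp add: poly_altdef)
  also have "\<dots> = (\<Sum>i\<le>degree P. coeff P i * (\<Sum>x\<in>S. w x * x ^ i))"
    by (simp add: sum_distrib_left sum_distrib_right mult_ac sum.swap[of _ S])
  also have "\<dots> = 0" using z by simp
  finally have A: "(\<Sum>x\<in>S. w x * poly P x) = 0" .
  have "(\<Sum>x\<in>S. w x * poly P x) = w s * poly P s + (\<Sum>x\<in>S-{s}. w x * poly P x)"
    using fin s by (simp add: sum.remove)
  also have "(\<Sum>x\<in>S-{s}. w x * poly P x) = 0"
  proof (rule sum.neutral, intro ballI)
    fix x assume x: "x \<in> S - {s}"
    have "poly P x = 0" unfolding polyP using fin x
      by (auto intro!: prod_zero bexI[of _ x])
    then show "w x * poly P x = 0" by simp
  qed
  finally have "w s * poly P s = 0" using A by simp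
  moreover have "poly P s \<noteq> 0" unfolding polyP using fin by (simp add: prod_zero_iff)
  ultimately show ?thesis by simp
qed

lemma sum_group_card:
  assumes "finite A" "finite S" "c ` A \<subseteq> S"
  shows "(\<Sum>x\<in>A. f (c x)) = (\<Sum>d\<in>S. card {x\<in>A. c x = d} * (f d :: nat))"
proof -
  have "(\<Sum>x\<in>A. f (c x)) = (\<Sum>d\<in>S. \<Sum>x\<in>{x\<in>A. c x = d}. f (c x))"
    using sum.group[OF assms, of "\<lambda>x. f (c x)"] by simp
  also have "\<dots> = (\<Sum>d\<in>S. card {x\<in>A. c x = d} * f d)"
    by (intro sum.cong refl) simp
  finally show ?thesis .
qed


definition cent :: "('a, 'b) monoid_scheme \<Rightarrow> 'a \<Rightarrow> 'a set" where
  "cent G g = {x \<in> carrier G. g \<otimes>\<^bsub>G\<^esub> x \<otimes>\<^bsub>G\<^esub> inv\<^bsub>G\<^esub> g = x}"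

definition cfun :: "('a, 'b) monoid_scheme \<Rightarrow> 'a \<Rightarrow> 'a \<Rightarrow> 'a" where
  "cfun G = (\<lambda>g x. g \<otimes>\<^bsub>G\<^esub> x \<otimes>\<^bsub>G\<^esub> inv\<^bsub>G\<^esub> g)"

definition csize :: "('a, 'b) monoid_scheme \<Rightarrow> 'a \<Rightarrow> nat" where
  "csize G g = card (orbit G (cfun G) g)"

context group begin

lemma conj_fix_iff:
  assumes "g \<in> carrier G" "x \<in> carrier G"
  shows "(g \<otimes> x \<otimes> inv g = x) \<longleftrightarrow> (g \<otimes> x = x \<otimes> g)"
proof
  assume "g \<otimes> x \<otimes> inv g = x"
  then have "g \<otimes> x \<otimes> inv g \<otimes> g = x \<otimes> g" by simp
  then show "g \<otimes> x = x \<otimes> g" using assms by (simp add: m_assoc)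
next
  assume "g \<otimes> x = x \<otimes> g"
  then show "g \<otimes> x \<otimes> inv g = x" using assms by (simp add: m_assoc)
qed

lemma cent_sym: "g \<in> carrier G \<Longrightarrow> cent G g = {h \<in> carrier G. h \<otimes> g \<otimes> inv h = g}"
  unfolding cent_def using conj_fix_iff by auto

lemma cent_one: "cent G \<one> = carrier G"
  unfolding cent_def by auto

lemma cent_sub: "cent G g \<subseteq> carrier G"
  unfolding cent_def by auto

lemma conj_action: "group_action G (carrier G) (\<lambda>g. \<lambda>x\<in>carrier G. cfun G g x)"
  using action_by_conjugation unfolding cfun_def by simp

lemma orbit_restrict: "x \<in> carrier G \<Longrightarrow> orbit G (\<lambda>g. \<lambda>x\<in>carrier G. cfun G g x) x = orbit G (cfun G) x"
  unfolding orbit_def by auto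

lemma conj_classes_eq: "conj_classes G = orbits G (carrier G) (\<lambda>g. \<lambda>x\<in>carrier G. cfun G g x)"
  unfolding conj_classes_def orbits_def using orbit_restrict unfolding cfun_def by auto

lemma conj_classes_eq2: "conj_classes G = {orbit G (cfun G) x | x. x \<in> carrier G}"
  unfolding conj_classes_def orbits_def cfun_def by simp

lemma csize_cent:
  assumes "g \<in> carrier G"
  shows "csize G g * card (cent G g) = Coset.order G"
proof -
  interpret A: group_action G "carrier G" "\<lambda>g. \<lambda>x\<in>carrier G. cfun G g x" by (rule conj_action)
  have "stabilizer G (\<lambda>g. \<lambda>x\<in>carrier G. cfun G g x) g = cent G g"
    using assms unfolding stabilizer_def cent_sym[OF assms] cfun_def by auto
  then show ?thesis using A.orbit_stabilizer_theorem[OF assms] orbit_restrict[OF assms]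
    unfolding csize_def by simp
qed

lemma sim_action: "group_action G (\<Pi>\<^sub>E i\<in>{..<n}. carrier G) (sim_conj G n)"
proof (rule mk_group_action)
  show "group G" by (rule is_group)
  show "sim_conj G n g \<in> extensional (\<Pi>\<^sub>E i\<in>{..<n}. carrier G)" for g
    unfolding sim_conj_def by simp
  show "sim_conj G n g x \<in> (\<Pi>\<^sub>E i\<in>{..<n}. carrier G)"
    if "g \<in> carrier G" "x \<in> (\<Pi>\<^sub>E i\<in>{..<n}. carrier G)" for g x
    using that unfolding sim_conj_def by auto
  show "sim_conj G n \<one> x = x" if "x \<in> (\<Pi>\<^sub>E i\<in>{..<n}. carrier G)" for x
    using that unfolding sim_conj_def by (auto simp: PiE_iff extensional_def)
  show "sim_conj G n (g \<otimes> h) x = sim_conj G n g (sim_conj G n h x)"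
    if "g \<in> carrier G" "h \<in> carrier G" "x \<in> (\<Pi>\<^sub>E i\<in>{..<n}. carrier G)" for g h x
    using that unfolding sim_conj_def by (auto simp: inv_mult_group m_assoc PiE_iff intro!: restrict_ext)
qed

lemma sim_invariants:
  assumes "g \<in> carrier G"
  shows "invariants (\<Pi>\<^sub>E i\<in>{..<n}. carrier G) (sim_conj G n) g = (\<Pi>\<^sub>E i\<in>{..<n}. cent G g)"
proof -
  have *: "sim_conj G n g x = x \<longleftrightarrow> (\<forall>i<n. x i \<in> cent G g)"
    if x: "x \<in> (\<Pi>\<^sub>E i\<in>{..<n}. carrier G)" for x
  proof -
    have e: "sim_conj G n g x = (\<lambda>i\<in>{..<n}. g \<otimes> x i \<otimes> inv g)" using x unfolding sim_conj_def by simp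
    have "(\<lambda>i\<in>{..<n}. g \<otimes> x i \<otimes> inv g) = x \<longleftrightarrow> (\<forall>i<n. g \<otimes> x i \<otimes> inv g = x i)"
      using x by (auto simp: PiE_iff extensional_def fun_eq_iff)
    then show ?thesis using x e unfolding cent_def by auto
  qed
  show ?thesis
  proof (rule Set.set_eqI)
    fix x
    have "x \<in> invariants (\<Pi>\<^sub>E i\<in>{..<n}. carrier G) (sim_conj G n) g \<longleftrightarrow>
      x \<in> (\<Pi>\<^sub>E i\<in>{..<n}. carrier G) \<and> (\<forall>i<n. x i \<in> cent G g)"
      unfolding invariants_def using * by blast
    also have "\<dots> \<longleftrightarrow> x \<in> (\<Pi>\<^sub>E i\<in>{..<n}. cent G g)"
      using cent_sub by (auto simp: PiE_iff)
    finally show "x \<in> invariants (\<Pi>\<^sub>E i\<in>{..<n}. carrier G) (sim_conj G n) g \<longleftrightarrow> x \<in> (\<Pi>\<^sub>E i\<in>{..<n}. cent G g)" .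
  qed
qed

lemma alpha_formula:
  assumes fin: "finite (carrier G)"
  shows "alpha G n * Coset.order G = (\<Sum>g\<in>carrier G. card (cent G g) ^ n)"
proof -
  interpret A: group_action G "\<Pi>\<^sub>E i\<in>{..<n}. carrier G" "sim_conj G n" by (rule sim_action)
  have "alpha G n * Coset.order G = (\<Sum>g\<in>carrier G. card (invariants (\<Pi>\<^sub>E i\<in>{..<n}. carrier G) (sim_conj G n) g))"
    unfolding alpha_def by (rule A.burnside[OF fin]) (simp add: fin finite_PiE)
  also have "\<dots> = (\<Sum>g\<in>carrier G. card (cent G g) ^ n)"
    by (intro sum.cong refl) (simp add: sim_invariants card_PiE)
  finally show ?thesis .
qed

end

lemma count_image_mset_set:
  assumes "finite A"
  shows "count (image_mset f (mset_set A)) k = card {x\<in>A. f x = k}"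
  using assms
proof (induction A rule: finite_induct)
  case empty then show ?case by simp
next
  case (insert a A)
  have e: "{x\<in>insert a A. f x = k} = (if f a = k then insert a {x\<in>A. f x = k} else {x\<in>A. f x = k})"
    by auto
  show ?case unfolding e using insert by simp
qed

definition Dc :: "('a, 'b) monoid_scheme \<Rightarrow> nat \<Rightarrow> nat" where
  "Dc G d = card {g\<in>carrier G. card (cent G g) = d}"

definition Ec :: "('a, 'b) monoid_scheme \<Rightarrow> nat \<Rightarrow> nat" where
  "Ec G k = card {g\<in>carrier G. csize G g = k}"

definition ncl :: "('a, 'b) monoid_scheme \<Rightarrow> nat \<Rightarrow> nat" where
  "ncl G k = card {K\<in>conj_classes G. card K = k}"

locale fgroup = group +
  assumes fin: "finite (carrier G)"
begin

interpretation A: group_action G "carrier G" "\<lambda>g. \<lambda>x\<in>carrier G. cfun G g x"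
  by (rule conj_action)

lemma order_pos: "0 < Coset.order G"
  using fin order_gt_0_iff_finite by blast

lemma orbit_sub: "g \<in> carrier G \<Longrightarrow> orbit G (cfun G) g \<subseteq> carrier G"
  unfolding orbit_def cfun_def by auto

lemma orbit_self: "g \<in> carrier G \<Longrightarrow> g \<in> orbit G (cfun G) g"
  using A.orbit_refl orbit_restrict by auto

lemma csize_pos: "g \<in> carrier G \<Longrightarrow> 0 < csize G g"
  unfolding csize_def using orbit_self orbit_sub fin
  by (metis card_gt_0_iff empty_iff finite_subset)

lemma cent_pos: "g \<in> carrier G \<Longrightarrow> 0 < card (cent G g)"
  using csize_cent order_pos by (metis gr0I mult_0_right)

lemma cent_le: "card (cent G g) \<le> Coset.order G"
  unfolding Coset.order_def by (rule card_mono[OF fin cent_sub])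

lemma csize_le: "g \<in> carrier G \<Longrightarrow> csize G g \<le> Coset.order G"
  unfolding Coset.order_def csize_def using orbit_sub fin by (simp add: card_mono)

lemma classes_orbits: "conj_classes G = orbits G (carrier G) (\<lambda>g. \<lambda>x\<in>carrier G. cfun G g x)"
  by (rule conj_classes_eq)

lemma class_of: "K \<in> conj_classes G \<Longrightarrow> g \<in> K \<Longrightarrow> g \<in> carrier G \<and> orbit G (cfun G) g = K"
proof -
  assume K: "K \<in> conj_classes G" and g: "g \<in> K"
  then obtain x where x: "x \<in> carrier G" "K = orbit G (cfun G) x" unfolding conj_classes_eq2 by auto
  have gc: "g \<in> carrier G" using g x orbit_sub by auto
  have o1: "orbit G (cfun G) g \<in> conj_classes G" unfolding conj_classes_eq2 using gc by auto
  have "orbit G (cfun G) g \<inter> K \<noteq> {}" using orbit_self[OF gc] g by auto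
  then have "orbit G (cfun G) g = K" using A.disjoint_union[of "orbit G (cfun G) g" K] o1 K
    unfolding classes_orbits by auto
  then show ?thesis using gc by simp
qed

lemma Ec_ncl: "Ec G k = k * ncl G k"
proof -
  let ?C = "{K\<in>conj_classes G. card K = k}"
  have eq: "{g\<in>carrier G. csize G g = k} = \<Union>?C"
  proof (rule Set.set_eqI)
    fix g
    show "g \<in> {g\<in>carrier G. csize G g = k} \<longleftrightarrow> g \<in> \<Union>?C"
    proof
      assume g: "g \<in> {g\<in>carrier G. csize G g = k}"
      then have "orbit G (cfun G) g \<in> ?C" unfolding conj_classes_eq2 csize_def by auto
      then show "g \<in> \<Union>?C" using orbit_self g by blast
    next
      assume "g \<in> \<Union>?C"
      then obtain K where "K \<in> ?C" "g \<in> K" by blast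
      then show "g \<in> {g\<in>carrier G. csize G g = k}" using class_of unfolding csize_def by auto
    qed
  qed
  have finC: "\<And>K. K \<in> ?C \<Longrightarrow> finite K"
    unfolding conj_classes_eq2 using orbit_sub fin finite_subset by blast
  have pw: "pairwise disjnt ?C"
    unfolding pairwise_def disjnt_def using A.disjoint_union classes_orbits by auto
  have "Ec G k = card (\<Union>?C)" unfolding Ec_def eq ..
  also have "\<dots> = sum card ?C" by (rule card_Union_disjoint[OF pw finC])
  also have "\<dots> = k * ncl G k" unfolding ncl_def by simp
  finally show ?thesis .
qed

lemma ncl_0: "ncl G 0 = 0"
proof -
  have "{K\<in>conj_classes G. card K = 0} = {}"
    unfolding conj_classes_eq2 using csize_pos unfolding csize_def by fastforce
  then show ?thesis unfolding ncl_def by (metis card.empty)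
qed

lemma finite_classes: "finite (conj_classes G)"
proof -
  have "conj_classes G \<subseteq> Pow (carrier G)" unfolding conj_classes_eq2 using orbit_sub by auto
  then show ?thesis using fin finite_subset by blast
qed

lemma count_classes: "count (image_mset card (mset_set (conj_classes G))) k = ncl G k"
  unfolding ncl_def by (rule count_image_mset_set[OF finite_classes])

lemma alpha_D:
  assumes "Coset.order G \<le> N"
  shows "alpha G n * Coset.order G = (\<Sum>d\<le>N. Dc G d * d ^ n)"
  unfolding alpha_formula[OF fin] Dc_def
  by (rule sum_group_card) (use fin cent_le assms in \<open>auto intro: le_trans\<close>)

lemma alpha_E:
  assumes "Coset.order G \<le> N"
  shows "alpha G n * Coset.order G = (\<Sum>k\<le>N. Ec G k * (Coset.order G div k) ^ n)"
proof -
  have "alpha G n * Coset.order G = (\<Sum>g\<in>carrier G. (Coset.order G div csize G g) ^ n)"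
    unfolding alpha_formula[OF fin]
    by (intro sum.cong refl) (metis csize_cent csize_pos nonzero_mult_div_cancel_left not_gr0)
  also have "\<dots> = (\<Sum>k\<le>N. Ec G k * (Coset.order G div k) ^ n)"
    unfolding Ec_def
    by (rule sum_group_card[where f = "\<lambda>k. (Coset.order G div k) ^ n"]) (use fin csize_le assms in \<open>auto intro: le_trans\<close>)
  finally show ?thesis .
qed

lemma E_D:
  assumes "0 < k" "k dvd Coset.order G"
  shows "Ec G k = Dc G (Coset.order G div k)"
proof -
  have "csize G g = k \<longleftrightarrow> card (cent G g) = Coset.order G div k" if g: "g \<in> carrier G" for g
    using csize_cent[OF g] csize_pos[OF g] cent_pos[OF g] assms
    by (metis dvd_mult_div_cancel mult.commute nonzero_mult_div_cancel_left not_gr0 order_pos)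
  then show ?thesis unfolding Ec_def Dc_def by (metis (mono_tags, lifting))
qed

lemma E_zero:
  assumes "k = 0 \<or> \<not> k dvd Coset.order G"
  shows "Ec G k = 0"
proof -
  have "{g\<in>carrier G. csize G g = k} = {}"
    using assms csize_pos csize_cent by (metis (mono_tags, lifting) Collect_empty_eq dvd_triv_left less_not_refl2)
  then show ?thesis unfolding Ec_def by (metis card.empty)
qed

lemma D_top: "Dc G (Coset.order G) \<ge> 1"
proof -
  have "\<one> \<in> {g\<in>carrier G. card (cent G g) = Coset.order G}" using cent_one by (auto simp: Coset.order_def)
  then show ?thesis unfolding Dc_def using fin
    by (metis (no_types, lifting) One_nat_def Suc_leI card_gt_0_iff empty_iff finite_subset mem_Collect_eq subsetI)
qed

lemma D_big: "Coset.order G < d \<Longrightarrow> Dc G d = 0"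
  unfolding Dc_def using cent_le by (metis (mono_tags, lifting) Collect_empty_eq card.empty leD)

end

lemma sce_iff:
  assumes "fgroup G" "fgroup H"
  shows "same_class_equation G H \<longleftrightarrow> Coset.order G = Coset.order H \<and> (\<forall>k. Ec G k = Ec H k)"
proof -
  interpret GG: fgroup G by (rule assms(1))
  interpret HH: fgroup H by (rule assms(2))
  have "(\<forall>k. ncl G k = ncl H k) \<longleftrightarrow> (\<forall>k. Ec G k = Ec H k)"
  proof
    assume "\<forall>k. ncl G k = ncl H k" then show "\<forall>k. Ec G k = Ec H k" by (simp add: GG.Ec_ncl HH.Ec_ncl)
  next
    assume E: "\<forall>k. Ec G k = Ec H k"
    show "\<forall>k. ncl G k = ncl H k"
    proof
      fix k show "ncl G k = ncl H k"
      proof (cases "k = 0")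
        case True then show ?thesis by (simp add: GG.ncl_0 HH.ncl_0)
      next
        case False then show ?thesis using E[rule_format, of k] by (simp add: GG.Ec_ncl HH.Ec_ncl)
      qed
    qed
  qed
  then show ?thesis unfolding same_class_equation_def multiset_eq_iff GG.count_classes HH.count_classes
    by simp
qed

lemma A_series_iff: "A_series G = A_series H \<longleftrightarrow> (\<forall>n. alpha G n = alpha H n)"
  unfolding A_series_def by (auto simp: fps_eq_iff)

theorem theorem2p1:
  fixes G :: "('a, 'b) monoid_scheme" and H :: "('c, 'd) monoid_scheme"
  assumes "group G" and "finite (carrier G)"
      and "group H" and "finite (carrier H)"
  shows "A_series G = A_series H \<longleftrightarrow> same_class_equation G H"
proof -
  have fG: "fgroup G" using assms by (simp add: fgroup_def fgroup_axioms_def)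
  have fH: "fgroup H" using assms by (simp add: fgroup_def fgroup_axioms_def)
  interpret GG: fgroup G by (rule fG)
  interpret HH: fgroup H by (rule fH)
  define oG where "oG = Coset.order G"
  define oH where "oH = Coset.order H"
  define N where "N = oG + oH"
  have oGp: "0 < oG" and oHp: "0 < oH" unfolding oG_def oH_def using GG.order_pos HH.order_pos by auto
  show ?thesis unfolding A_series_iff sce_iff[OF fG fH] oG_def[symmetric] oH_def[symmetric]
  proof
    assume al: "\<forall>n. alpha G n = alpha H n"
    have nat_eq: "oH * (\<Sum>d\<le>N. Dc G d * d ^ n) = oG * (\<Sum>d\<le>N. Dc H d * d ^ n)" for n
    proof -
      have "oH * (\<Sum>d\<le>N. Dc G d * d ^ n) = oH * (alpha G n * oG)"
        using GG.alpha_D[of N n] unfolding N_def oG_def by simp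
      also have "\<dots> = oG * (alpha H n * oH)" using al by simp
      also have "\<dots> = oG * (\<Sum>d\<le>N. Dc H d * d ^ n)"
        using HH.alpha_D[of N n] unfolding N_def oH_def by simp
      finally show ?thesis .
    qed
    define w where "w x = int oH * int (Dc G (nat x)) - int oG * int (Dc H (nat x))" for x :: int
    have z: "(\<Sum>x\<in>int ` {..N}. w x * x ^ n) = 0" for n
    proof -
      have "(\<Sum>x\<in>int ` {..N}. w x * x ^ n) = (\<Sum>d\<le>N. w (int d) * int d ^ n)"
        by (simp add: sum.reindex)
      also have "\<dots> = int oH * (\<Sum>d\<le>N. int (Dc G d) * int d ^ n) - int oG * (\<Sum>d\<le>N. int (Dc H d) * int d ^ n)"
        unfolding w_def by (simp add: sum_distrib_left sum_subtractf algebra_simps)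
      also have "\<dots> = int (oH * (\<Sum>d\<le>N. Dc G d * d ^ n)) - int (oG * (\<Sum>d\<le>N. Dc H d * d ^ n))"
        by simp
      also have "\<dots> = 0" using nat_eq[of n] by simp
      finally show ?thesis .
    qed
    have lin: "oH * Dc G d = oG * Dc H d" if "d \<le> N" for d
    proof -
      have "w (int d) = 0" by (rule power_sums_indep[OF _ z]) (use that in auto)
      then have "int (oH * Dc G d) = int (oG * Dc H d)" unfolding w_def by simp
      then show ?thesis by (simp only: of_nat_eq_iff)
    qed
    have eqo: "oG = oH"
    proof (rule ccontr)
      assume "oG \<noteq> oH"
      then consider "oG < oH" | "oH < oG" by linarith
      then show False
      proof cases
        case 1
        have "oH * Dc G oH = oG * Dc H oH" by (rule lin) (simp add: N_def)
        moreover have "Dc G oH = 0" using GG.D_big 1 unfolding oG_def by simp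
        moreover have "Dc H oH \<ge> 1" using HH.D_top unfolding oH_def by simp
        ultimately show False using oGp by simp
      next
        case 2
        have "oH * Dc G oG = oG * Dc H oG" by (rule lin) (simp add: N_def)
        moreover have "Dc H oG = 0" using HH.D_big 2 unfolding oH_def by simp
        moreover have "Dc G oG \<ge> 1" using GG.D_top unfolding oG_def by simp
        ultimately show False using oHp by simp
      qed
    qed
    have DD: "Dc G d = Dc H d" if "d \<le> N" for d
      using lin[OF that] eqo oGp by simp
    have "Ec G k = Ec H k" for k
    proof (cases "k = 0 \<or> \<not> k dvd oG")
      case True
      then show ?thesis using GG.E_zero HH.E_zero eqo unfolding oG_def oH_def by metis
    next
      case False
      then have k: "0 < k" "k dvd oG" by auto
      have "Ec G k = Dc G (oG div k)" using GG.E_D k unfolding oG_def by simp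
      also have "\<dots> = Dc H (oH div k)"
      proof -
        have "oG div k \<le> N" unfolding N_def using div_le_dividend[of oG k] by linarith
        then show ?thesis using DD[of "oG div k"] eqo by simp
      qed
      also have "\<dots> = Ec H k" using HH.E_D k eqo unfolding oH_def oG_def by simp
      finally show ?thesis .
    qed
    then show "oG = oH \<and> (\<forall>k. Ec G k = Ec H k)" using eqo by simp
  next
    assume h: "oG = oH \<and> (\<forall>k. Ec G k = Ec H k)"
    show "\<forall>n. alpha G n = alpha H n"
    proof
      fix n
      have "alpha G n * oG = (\<Sum>k\<le>N. Ec G k * (oG div k) ^ n)"
        using GG.alpha_E[of N n] unfolding N_def oG_def by simp
      also have "\<dots> = (\<Sum>k\<le>N. Ec H k * (oH div k) ^ n)" using h by simp
      also have "\<dots> = alpha H n * oH"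
        using HH.alpha_E[of N n] unfolding N_def oH_def by simp
      finally show "alpha G n = alpha H n" using h oGp by simp
    qed
  qed
qed

end
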